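(* Consider the early contracting game with fully informative grading in which every school has student abilities uniformly distributed on $[0,1]$. At any equilibrium, the set of jobs that contract early is an interval of job qualities $[b,c]$, and the set of abilities that these jobs receive under the truthful mapping $Q_T$ is an interval $[a,1-a]$ symmetric around $1/2$.
   Context: Students form a continuum of unit mass; every school (a continuum of infinitesimal schools) has student abilities uniformly distributed on $[0,1]$, so every school has average ability $1/2$. Jobs form a continuum of unit mass with qualities in $[0,1]$, continuous CDF $\mu$ with positive density. $Q_T$ is the nondecreasing assortative map: students with ability at most $a$ get exactly the jobs of quality at most $Q_T(a)$. Grading is fully informative (each student's label is their true ability). Agents are risk neutral. Early contracting game: in stage 1 a job may contract with a uniformly random student of a school (expected ability $1/2$); in stage 2 remaining students are matched to remaining jobs assortatively by true ability, via an increasing map $\hat Q$. Equilibrium: (1) a stage-1 contract between a school of average $\hat a$ and job $q$ requires $\hat Q^{-1}(q)\le\hat a$ and that the school's remaining students' average stage-2 quality be at most $q$; (2) there is no school of average $\hat a$ with stage-2 students and job $q$ with $\hat Q^{-1}(q)<\hat a$ such that the school's average stage-2 quality is below $q$; (3) among stage-1 jobs, better jobs go to schools of no lower average ability. *)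

theory Defs
  imports "HOL-Analysis.Analysis"
begin

text \<open>Jobs: qualities in [0,1] with positive density f; the job CDF is
  mu(q) = jobmass f {0..q}.  Students: every school has abilities uniform on [0,1],
  hence every school has average ability 1/2.\<close>

definition jobmass :: "(real \<Rightarrow> real) \<Rightarrow> real set \<Rightarrow> real" where
  "jobmass f A = (LINT q:A|lborel. f q)"

text \<open>Truthful assortative map Q_T: students with ability at most a get exactly
  the jobs of quality at most Q_T a, i.e. mu (Q_T a) = a.\<close>
definition QT :: "(real \<Rightarrow> real) \<Rightarrow> real \<Rightarrow> real" where
  "QT f a = (THE q. q \<in> {0..1} \<and> jobmass f {0..q} = a)"

text \<open>Stage-2 ability rank of job q (the value of the inverse of the stage-2
  assortative map): mass of stage-2 jobs of quality at most q, divided by the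
  mass of stage-2 students (which are uniformly distributed on [0,1]).\<close>
definition stage2_rank :: "(real \<Rightarrow> real) \<Rightarrow> real set \<Rightarrow> real \<Rightarrow> real" where
  "stage2_rank f E q = jobmass f ({0..q} - E) / (1 - jobmass f E)"

text \<open>Average stage-2 job quality of a school's remaining students (which are
  still uniform on [0,1], since stage-1 students are drawn uniformly at random).\<close>
definition stage2_avg :: "(real \<Rightarrow> real) \<Rightarrow> real" where
  "stage2_avg Qh = (LINT a:{0..1}|lborel. Qh a)"

text \<open>Equilibrium of the early contracting game: E is the set of job qualities
  contracting in stage 1, Qh the increasing stage-2 assortative map.  All schools
  have average ability 1/2, so condition (3) is vacuous.\<close>
definition early_equilibrium ::
  "(real \<Rightarrow> real) \<Rightarrow> real set \<Rightarrow> (real \<Rightarrow> real) \<Rightarrow> bool" where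
  "early_equilibrium f E Qh \<longleftrightarrow>
     E \<subseteq> {0..1} \<and> E \<in> sets lborel \<and>
     mono_on {0..1} Qh \<and> Qh ` {0..1} \<subseteq> {0..1} \<and>
     (\<forall>a\<in>{0..1}. (1 - jobmass f E) * a = jobmass f ({0..Qh a} - E)) \<and>
     (\<forall>q\<in>E. stage2_rank f E q \<le> 1/2 \<and> stage2_avg Qh \<le> q) \<and>
     (jobmass f E < 1 \<longrightarrow>
        (\<forall>q\<in>{0..1} - E. \<not> (stage2_rank f E q < 1/2 \<and> stage2_avg Qh < q)))"

end

theory Submission
  imports Defs
begin

locale jm =
  fixes f :: "real \<Rightarrow> real"
  assumes fpos: "\<forall>q\<in>{0..1}. f q > 0"
    and fint: "set_integrable lborel {0..1} f"
begin

abbreviation J where "J \<equiv> jobmass f"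

lemma intg: "S \<in> sets lborel \<Longrightarrow> S \<subseteq> {0..1} \<Longrightarrow> set_integrable lborel S f"
  using set_integrable_subset[OF fint] by blast

lemma nonneg: assumes "S \<subseteq> {0..1}" shows "0 \<le> J S"
  unfolding jobmass_def set_lebesgue_integral_def
  by (rule integral_nonneg_AE, rule AE_I2) (use assms fpos in \<open>auto simp: indicator_def less_imp_le\<close>)

lemma add: assumes "A \<in> sets lborel" "B \<in> sets lborel" "A \<subseteq> {0..1}" "B \<subseteq> {0..1}" "A \<inter> B = {}"
  shows "J (A \<union> B) = J A + J B"
  unfolding jobmass_def by (rule set_integral_Un) (use assms intg in auto)

lemma mono: assumes "S \<in> sets lborel" "T \<in> sets lborel" "S \<subseteq> T" "T \<subseteq> {0..1}"
  shows "J S \<le> J T"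
proof -
  have "T = S \<union> (T - S)" using assms by auto
  then have "J T = J S + J (T - S)" using add[of S "T - S"] assms by auto
  moreover have "0 \<le> J (T - S)" using nonneg[of "T - S"] assms by auto
  ultimately show ?thesis by simp
qed

lemma null: assumes "S \<in> null_sets lborel" shows "J S = 0"
  unfolding jobmass_def set_lebesgue_integral_def
  by (rule integral_eq_zero_AE) (use AE_not_in[OF assms] in \<open>auto elim!: eventually_mono\<close>)

lemma fin0: "finite S \<Longrightarrow> J S = 0"
  using null finite_imp_null_set_lborel by blast

lemma sub_fin: assumes "S \<in> sets lborel" "T \<in> sets lborel" "finite N" "S \<subseteq> T \<union> N" "T \<subseteq> {0..1}" "N \<subseteq> {0..1}"
  shows "J S \<le> J T"
proof -
  have Nm: "N - T \<in> sets lborel" proof -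
    have "finite (N - T)" using assms by auto
    then show ?thesis using finite_imp_null_set_lborel null_setsD2 by blast
  qed
  have "T \<union> (N - T) \<in> sets lborel" using sets.Un[OF assms(2) Nm] by simp
  then have "J S \<le> J (T \<union> (N - T))" using assms Nm by (intro mono) auto
  also have "\<dots> = J T + J (N - T)" using assms Nm by (intro add) auto
  also have "J (N - T) = 0" using assms by (intro fin0) auto
  finally show ?thesis by simp
qed

lemma ival: assumes "0 \<le> x" "y \<le> 1" shows "J {x..y} = integral {x..y} f"
  unfolding jobmass_def using assms by (intro set_borel_integral_eq_integral intg) auto

lemma combine: assumes "0 \<le> x" "x \<le> y" "y \<le> 1" shows "J {0..y} = J {0..x} + J {x..y}"
proof -
  have "f integrable_on {0..y}" using set_borel_integral_eq_integral(1)[OF intg[of "{0..y}"]] assms by auto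
  then show ?thesis using assms ival Henstock_Kurzweil_Integration.integral_combine[where a=0 and c=x and b=y and f=f] by auto
qed

lemma pos: assumes "0 \<le> x" "x < y" "y \<le> 1" shows "J {x..y} > 0"
proof (rule ccontr)
  assume "\<not> J {x..y} > 0"
  with nonneg[of "{x..y}"] assms have z: "J {x..y} = 0" by auto
  have int: "integrable lborel (\<lambda>z. indicator {x..y} z *\<^sub>R f z)"
    using intg[of "{x..y}"] assms unfolding set_integrable_def by auto
  have nn: "AE z in lborel. 0 \<le> indicator {x..y} z *\<^sub>R f z"
    by (rule AE_I2) (use assms fpos in \<open>auto simp: indicator_def less_imp_le\<close>)
  have "AE z in lborel. indicator {x..y} z *\<^sub>R f z = 0"
    using z integral_nonneg_eq_0_iff_AE[OF int nn] unfolding jobmass_def set_lebesgue_integral_def by simp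
  then have "AE z in lborel. z \<notin> {x..y}"
  proof (rule eventually_mono)
    fix z assume h: "indicator {x..y} z *\<^sub>R f z = 0"
    show "z \<notin> {x..y}"
    proof
      assume zz: "z \<in> {x..y}"
      then have "f z > 0" using fpos assms by auto
      then show False using h zz by simp
    qed
  qed
  then have "emeasure lborel {x..y} = 0"
  proof -
    have eq: "{z \<in> space lborel. \<not> (z \<notin> {x..y})} = {x..y}" by auto
    show ?thesis using AE_iff_measurable[of "{x..y}" lborel "\<lambda>z. z \<notin> {x..y}", OF _ eq] \<open>AE z in lborel. z \<notin> {x..y}\<close> by simp
  qed
  then show False using assms by simp
qed

lemma contg: assumes E: "E \<in> sets lborel" shows "continuous_on {0..1} (\<lambda>q. J ({0..q} - E))"
proof -
  define g where "g = (\<lambda>z. indicator (- E) z * f z)"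
  have eq: "J (S - E) = (LINT z:S|lborel. g z)" for S
    unfolding jobmass_def set_lebesgue_integral_def g_def
    by (rule Bochner_Integration.integral_cong) (auto simp: indicator_def)
  have gi: "set_integrable lborel S g" if "S \<in> sets lborel" "S \<subseteq> {0..1}" for S
  proof -
    have "set_integrable lborel (S - E) f" using that E by (intro intg) auto
    moreover have "(\<lambda>x. indicator S x *\<^sub>R g x) = (\<lambda>x. indicator (S - E) x *\<^sub>R f x)"
      by (auto simp: g_def indicator_def fun_eq_iff)
    ultimately show ?thesis unfolding set_integrable_def by simp
  qed
  have "g integrable_on {0..1}" using set_borel_integral_eq_integral(1)[OF gi[of "{0..1}"]] by auto
  then have c: "continuous_on {0..1} (\<lambda>q. integral {0..q} g)" by (rule indefinite_integral_continuous_1)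
  have "J ({0..q} - E) = integral {0..q} g" if "q \<in> {0..1}" for q
    using eq[of "{0..q}"] set_borel_integral_eq_integral(2)[OF gi[of "{0..q}"]] that by auto
  then show ?thesis using continuous_on_cong[THEN iffD2, OF refl _ c] by auto
qed

lemma mu0: "J {0..0} = 0" by (intro fin0) auto

lemma mu_strict: assumes "0 \<le> x" "x < y" "y \<le> 1" shows "J {0..x} < J {0..y}"
  using combine[of x y] pos[of x y] assms by auto

lemma mu_le_iff: assumes "x \<in> {0..1}" "y \<in> {0..1}" shows "J {0..x} \<le> J {0..y} \<longleftrightarrow> x \<le> y"
  using mu_strict[of x y] mu_strict[of y x] assms by (cases x y rule: linorder_cases) auto

lemma mu_cont: "continuous_on {0..1} (\<lambda>q. J {0..q})"
  using contg[of "{}"] by simp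

end

locale jm1 = jm +
  assumes ftot: "jobmass f {0..1} = 1"
begin

lemma QT: assumes "x \<in> {0..1}" shows "QT f x \<in> {0..1} \<and> J {0..QT f x} = x"
proof -
  obtain q where q: "0 \<le> q" "q \<le> 1" "J {0..q} = x"
    using IVT'[of "\<lambda>q. J {0..q}" 0 x 1] mu0 ftot assms mu_cont by auto
  have "\<exists>!q. q \<in> {0..1} \<and> J {0..q} = x"
  proof (rule ex1I[of _ q])
    show "q \<in> {0..1} \<and> J {0..q} = x" using q by auto
    fix r assume "r \<in> {0..1} \<and> J {0..r} = x"
    then show "r = q" using mu_le_iff[of r q] mu_le_iff[of q r] q by auto
  qed
  then show ?thesis unfolding QT_def by (rule theI')
qed

lemma LQT: assumes "0 \<le> b" "b \<le> c" "c \<le> 1"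
  shows "{x\<in>{0..1}. QT f x \<in> {b..c}} = {J {0..b}..J {0..c}}"
proof (intro equalityI subsetI)
  fix x assume "x \<in> {x\<in>{0..1}. QT f x \<in> {b..c}}"
  then have x: "x \<in> {0..1}" "QT f x \<in> {b..c}" by auto
  with QT[OF x(1)] mu_le_iff[of b "QT f x"] mu_le_iff[of "QT f x" c] assms
  show "x \<in> {J {0..b}..J {0..c}}" by auto
next
  fix x assume x: "x \<in> {J {0..b}..J {0..c}}"
  have "0 \<le> J {0..b}" "J {0..c} \<le> 1" using mu_le_iff[of 0 b] mu_le_iff[of c 1] mu0 ftot assms by auto
  with x have x1: "x \<in> {0..1}" by auto
  with QT[OF x1] mu_le_iff[of b "QT f x"] mu_le_iff[of "QT f x" c] assms x
  show "x \<in> {x\<in>{0..1}. QT f x \<in> {b..c}}" by auto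
qed

lemma main:
  assumes eq: "early_equilibrium f E Qh"
  shows "\<exists>a b c. 0 \<le> b \<and> b \<le> c \<and> c \<le> 1 \<and>
           jobmass f (E - {b..c}) = 0 \<and> jobmass f ({b..c} - E) = 0 \<and>
           0 \<le> a \<and> a \<le> 1/2 \<and>
           {x\<in>{0..1}. QT f x \<in> {b..c}} = {a..1-a}"
proof -
  from eq have Esub: "E \<subseteq> {0..1}" and Em: "E \<in> sets lborel"
    and rank: "\<forall>q\<in>E. stage2_rank f E q \<le> 1/2 \<and> stage2_avg Qh \<le> q"
    and c3: "J E < 1 \<longrightarrow> (\<forall>q\<in>{0..1} - E. \<not> (stage2_rank f E q < 1/2 \<and> stage2_avg Qh < q))"
    unfolding early_equilibrium_def by auto
  define m where "m = J E"
  have m1: "m \<le> 1" using mono[of E "{0..1}"] ftot Esub Em unfolding m_def by auto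
  have m0: "0 \<le> m" using nonneg Esub unfolding m_def by auto
  have spl: "J ({0..1} - E) = 1 - m"
  proof -
    have "{0..1} = E \<union> ({0..1} - E)" using Esub by auto
    then have "J {0..1} = J E + J ({0..1} - E)" using add[of E "{0..1} - E"] Esub Em by auto
    then show ?thesis using ftot unfolding m_def by simp
  qed
  consider "m = 1" | "m = 0" | "0 < m \<and> m < 1" using m0 m1 by linarith
  then show ?thesis
  proof cases
    case 1
    have f1: "J (E - {0..1}) = 0" using Esub fin0[of "{}"] by (simp add: Diff_eq_empty_iff[THEN iffD2])
    have f2: "J ({0..1} - E) = 0" using spl 1 by simp
    have f3: "{x\<in>{0..1}. QT f x \<in> {0..1}} = {0..1 - 0}" using LQT[of 0 1] mu0 ftot by simp
    show ?thesis using f1 f2 f3 by (intro exI[of _ 0] exI[of _ 0] exI[of _ 1] conjI) simp_all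
  next
    case 2
    define b where "b = QT f (1/2)"
    have hb: "b \<in> {0..1}" "J {0..b} = 1/2" using QT[of "1/2"] unfolding b_def by auto
    have f1: "J (E - {b..b}) \<le> J E" using Esub Em by (intro mono) auto
    have f2: "0 \<le> J (E - {b..b})" using Esub by (intro nonneg) auto
    have f3: "J ({b..b} - E) = 0" by (intro fin0) auto
    have f4: "{x\<in>{0..1}. QT f x \<in> {b..b}} = {1/2..1 - 1/2}" using LQT[of b b] hb by simp
    have f5: "J (E - {b..b}) = 0" using f1 f2 2 unfolding m_def by simp
    show ?thesis using f3 f4 f5 hb
      by (intro exI[of _ "1/2"] exI[of _ b] exI[of _ b] conjI) simp_all
  next
    case 3
    define g where "g q = J ({0..q} - E)" for q
    define h where "h = (1 - m) / 2"
    define A where "A = stage2_avg Qh"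
    have hpos: "0 < h" using 3 unfolding h_def by simp
    have gc: "continuous_on {0..1} g" unfolding g_def using contg[OF Em] .
    have gmono: "g x \<le> g y" if "x \<le> y" "y \<le> 1" for x y
      unfolding g_def using that Em by (intro mono) auto
    have g0: "g 0 = 0" unfolding g_def by (intro fin0) auto
    have g1: "g 1 = 1 - m" unfolding g_def using spl .
    have rk: "stage2_rank f E q = g q / (1 - m)" for q
      unfolding stage2_rank_def g_def m_def by simp
    have rle: "stage2_rank f E q \<le> 1/2 \<longleftrightarrow> g q \<le> h" for q
      using 3 unfolding rk h_def by (simp add: divide_simps) 
    have rlt: "stage2_rank f E q < 1/2 \<longleftrightarrow> g q < h" for q
      using 3 unfolding rk h_def by (simp add: divide_simps) 
    define L where "L = {q \<in> {0..1}. g q = h}"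
    have Lcl: "closed L" unfolding L_def by (rule continuous_closed_preimage_constant[OF gc closed_atLeastAtMost])
    have Lne: "L \<noteq> {}"
    proof -
      obtain q where "0 \<le> q" "q \<le> 1" "g q = h"
        using IVT'[of g 0 h 1] g0 g1 hpos gc unfolding h_def by auto
      then show ?thesis unfolding L_def by auto
    qed
    have Lab: "bdd_above L" "bdd_below L" unfolding L_def by (auto intro: bdd_aboveI[of _ 1] bdd_belowI[of _ 0])
    define c where "c = Sup L"
    define q0 where "q0 = Inf L"
    have cL: "c \<in> L" unfolding c_def using closed_contains_Sup[OF Lne Lab(1) Lcl] .
    have q0L: "q0 \<in> L" unfolding q0_def using closed_contains_Inf[OF Lne Lab(2) Lcl] .
    have Lc: "q \<le> c" if "q \<in> L" for q unfolding c_def using cSup_upper[OF that Lab(1)] .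
    have Lq0: "q0 \<le> q" if "q \<in> L" for q unfolding q0_def using cInf_lower[OF that Lab(2)] .
    have c01: "0 \<le> c" "c \<le> 1" "g c = h" using cL unfolding L_def by auto
    have q01: "0 \<le> q0" "q0 \<le> c" "g q0 = h" using q0L Lc[OF q0L] unfolding L_def by auto
    have above: "q \<le> c" if "q \<in> {0..1}" "g q \<le> h" for q
    proof (rule ccontr)
      assume "\<not> q \<le> c"
      then have "g c \<le> g q" using gmono[of c q] that by auto
      then have "q \<in> L" using that c01 unfolding L_def by auto
      then show False using Lc \<open>\<not> q \<le> c\<close> by auto
    qed
    have Eb: "A \<le> q \<and> q \<le> c" if "q \<in> E" for q
      using rank that rle above[of q] Esub unfolding A_def by auto
    have Ene: "E \<noteq> {}" using 3 fin0[of "{}"] unfolding m_def by auto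
    then obtain e where e: "e \<in> E" by auto
    define b where "b = max A 0"
    have b0: "0 \<le> b" "b \<le> c" using Eb[OF e] e Esub unfolding b_def by auto
    have Ebc: "E \<subseteq> {b..c}" using Eb Esub unfolding b_def by force
    have gap: "J ({q0<..c} - E) = 0"
    proof -
      have "{0..c} - E = ({0..q0} - E) \<union> ({q0<..c} - E)" using q01 by auto
      moreover have "J (({0..q0} - E) \<union> ({q0<..c} - E)) = J ({0..q0} - E) + J ({q0<..c} - E)"
        by (rule add) (use Em q01 c01 in auto)
      ultimately have "g c = g q0 + J ({q0<..c} - E)" unfolding g_def by simp
      then show ?thesis using q01 c01 by simp
    qed
    have cover: "{b..c} - E \<subseteq> ({q0<..c} - E) \<union> {b, q0}"
    proof
      fix q assume q: "q \<in> {b..c} - E"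
      show "q \<in> ({q0<..c} - E) \<union> {b, q0}"
      proof (cases "q = b")
        case False
        then have qb: "b < q" using q by auto
        have q1: "q \<in> {0..1} - E" using q b0 c01 by auto
        then have "\<not> (g q < h \<and> A < q)" using c3 3 rlt unfolding m_def A_def by auto
        then have "h \<le> g q" using qb unfolding b_def by auto
        moreover have "g q \<le> g c" using gmono[of q c] q c01 by auto
        ultimately have "q \<in> L" using q1 c01 unfolding L_def by auto
        then show ?thesis using Lq0 q by fastforce
      qed auto
    qed
    have bcE: "J ({b..c} - E) = 0"
    proof -
      have "J ({b..c} - E) \<le> J ({q0<..c} - E)"
        using cover Em b0 c01 q01 by (intro sub_fin[of _ _ "{b, q0}"]) auto
      moreover have "0 \<le> J ({b..c} - E)" using b0 c01 by (intro nonneg) auto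
      ultimately show ?thesis using gap by simp
    qed
    have muc: "J {0..c} = m + h"
    proof -
      have "{0..c} = E \<union> ({0..c} - E)" using Ebc b0 by auto
      moreover have "J (E \<union> ({0..c} - E)) = J E + J ({0..c} - E)"
        by (rule add) (use Esub Em c01 in auto)
      ultimately have "J {0..c} = J E + J ({0..c} - E)" by simp
      then show ?thesis using c01 unfolding g_def m_def by simp
    qed
    have Jbc: "J {b..c} = m"
    proof -
      have "{b..c} = E \<union> ({b..c} - E)" using Ebc by auto
      moreover have "J (E \<union> ({b..c} - E)) = J E + J ({b..c} - E)"
        by (rule add) (use Esub Em c01 b0 in auto)
      ultimately have "J {b..c} = J E + J ({b..c} - E)" by simp
      then show ?thesis using bcE unfolding m_def by simp
    qed
    have mub: "J {0..b} = h" using combine[of b c] b0 c01 muc Jbc by simp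
    have "{x\<in>{0..1}. QT f x \<in> {b..c}} = {h..1 - h}"
      using LQT[of b c] b0 c01 mub muc unfolding h_def by (simp add: field_simps)
    moreover have "J (E - {b..c}) = 0" using Ebc fin0[of "{}"] by (simp add: Diff_eq_empty_iff[THEN iffD2])
    moreover have "h \<le> 1/2" using m0 unfolding h_def by simp
    ultimately show ?thesis using b0 c01 bcE hpos
      by (intro exI[of _ h] exI[of _ b] exI[of _ c] conjI) simp_all
  qed
qed

end
theorem mainTheorem11:
  fixes f :: "real \<Rightarrow> real" and E :: "real set" and Qh :: "real \<Rightarrow> real"
  assumes fpos: "\<forall>q\<in>{0..1}. f q > 0"
    and fint: "set_integrable lborel {0..1} f"
    and ftot: "jobmass f {0..1} = 1"
    and eq: "early_equilibrium f E Qh"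
  shows "\<exists>a b c. 0 \<le> b \<and> b \<le> c \<and> c \<le> 1 \<and>
           jobmass f (E - {b..c}) = 0 \<and> jobmass f ({b..c} - E) = 0 \<and>
           0 \<le> a \<and> a \<le> 1/2 \<and>
           {x\<in>{0..1}. QT f x \<in> {b..c}} = {a..1-a}"
proof -
  interpret jm1 f using fpos fint ftot by unfold_locales auto
  show ?thesis using main[OF eq] .
qed

end
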